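(* Let $n\in\mathbb{N}$, $j\in\mathbb{Z}$, let $g\in\mathcal{H}(V_j^+)$ and $\omega\in\mathbb{R}$. Then $$\Phi_n g(\omega)=i\,\operatorname{sgn}(\omega)\,\Phi_n\mathcal{H}g(\omega),$$ i.e. $i\int_{-\infty}^\infty s_n(\omega t)g(t)\,dt=i\,\operatorname{sgn}(\omega)\int_{-\infty}^\infty c_n(\omega t)(\mathcal{H}g)(t)\,dt$, where the left-hand integral is understood in the distributional sense (for $\omega\neq0$ as $\frac{1}{|\omega|}\langle s_n, g(\cdot/\omega)\rangle$, and as $0$ for $\omega=0$).
   Context: For $n\in\mathbb{N}$, $c_n(\eta)=\sum_{l\ge0}\frac{(-1)^l n}{(2n)^{2l+\frac{1}{2n}}\Gamma(l+\frac{1}{2n})l!}\eta^{2nl}$ (an even entire function), $s_n=-\mathcal{H}c_n$ where $\mathcal{H}$ is the Hilbert transform on tempered distributions (on $L^2(\mathbb{R})$: $\mathcal{H}f(x)=\frac1\pi\,\mathrm{p.v.}\int\frac{f(t)}{x-t}dt$, a unitary operator mapping even functions to odd ones and vice versa); $s_n$ is an odd function, and $\varphi_n=c_n+is_n$. The transform is $\Phi_n g(\omega)=\int\varphi_n(\omega t)g(t)\,dt$; for odd $g$ this reduces to $i\int s_n(\omega t)g(t)\,dt$, for even $g$ to $\int c_n(\omega t)g(t)\,dt$. Let $\phi=\mathbf{1}_{[0,1]}$, $\phi_{j,k}(t)=\phi(2^jt-k)$ for $j,k\in\mathbb{Z}$, $V_j$ the space of finite linear combinations of $\{\phi_{j,k}\}_{k\in\mathbb{Z}}$,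 and $V_j^+$ the subspace of even functions in $V_j$; $\mathcal{H}(V_j^+)$ is its image under $\mathcal{H}$ (odd functions). $\operatorname{sgn}(0)=0$. *)

theory Defs
  imports "HOL-Analysis.Analysis"
begin

definition cn :: "nat \<Rightarrow> real \<Rightarrow> real" where
  "cn n \<eta> = (\<Sum>l. ((-1) ^ l * real n /
      ((2 * real n) powr (2 * real l + 1 / (2 * real n)) * Gamma (real l + 1 / (2 * real n)) * fact l))
      * \<eta> ^ (2 * n * l))"

definition hilbert_trunc :: "(real \<Rightarrow> real) \<Rightarrow> real \<Rightarrow> real \<Rightarrow> real \<Rightarrow> real" where
  "hilbert_trunc f x \<epsilon> R = integral {t. \<epsilon> \<le> \<bar>x - t\<bar> \<and> \<bar>x - t\<bar> \<le> R} (\<lambda>t. f t / (x - t))"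

definition hilbert :: "(real \<Rightarrow> real) \<Rightarrow> real \<Rightarrow> real" where
  "hilbert f x = (1 / pi) * Lim (at_right 0) (\<lambda>\<epsilon>. Lim at_top (\<lambda>R. hilbert_trunc f x \<epsilon> R))"

text \<open>Hilbert transform of a (function-represented) distribution u, defined by transposition:
  <H u, phi> = - <u, H phi>.\<close>
definition dist_hilbert :: "(real \<Rightarrow> real) \<Rightarrow> (real \<Rightarrow> real) \<Rightarrow> real" where
  "dist_hilbert u \<phi> = - integral UNIV (\<lambda>t. u t * hilbert \<phi> t)"

definition sn_pair :: "nat \<Rightarrow> (real \<Rightarrow> real) \<Rightarrow> real" where
  "sn_pair n \<phi> = - dist_hilbert (cn n) \<phi>"

definition sn_integral :: "nat \<Rightarrow> (real \<Rightarrow> real) \<Rightarrow> real \<Rightarrow> real" where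
  "sn_integral n g \<omega> = (if \<omega> = 0 then 0 else sn_pair n (\<lambda>t. g (t / \<omega>)) / \<bar>\<omega>\<bar>)"

definition haar_phi :: "real \<Rightarrow> real" where
  "haar_phi t = indicator {0..1} t"

definition phi_jk :: "int \<Rightarrow> int \<Rightarrow> real \<Rightarrow> real" where
  "phi_jk j k t = haar_phi (2 powr (real_of_int j) * t - real_of_int k)"

definition V :: "int \<Rightarrow> (real \<Rightarrow> real) set" where
  "V j = {f. \<exists>K a. finite K \<and> f = (\<lambda>t. \<Sum>k\<in>K. a k * phi_jk j k t)}"

definition Vplus :: "int \<Rightarrow> (real \<Rightarrow> real) set" where
  "Vplus j = {f \<in> V j. \<forall>t. f (- t) = f t}"

end

theory Submission
  imports Defs "HOL-Real_Asymp.Real_Asymp"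
begin


lemma xlnx_isCont: "isCont (\<lambda>x::real. x * ln \<bar>x\<bar>) y"
proof (cases "y = 0")
  case True
  have "((\<lambda>x::real. x * ln \<bar>x\<bar>) \<longlongrightarrow> 0) (at_right 0)" by real_asymp
  moreover have "((\<lambda>x::real. x * ln \<bar>x\<bar>) \<longlongrightarrow> 0) (at_left 0)" by real_asymp
  ultimately have "((\<lambda>x::real. x * ln \<bar>x\<bar>) \<longlongrightarrow> 0) (at 0)"
    by (intro filterlim_split_at)
  then show ?thesis using True by (simp add: isCont_def)
next
  case False
  then show ?thesis by (intro continuous_intros) auto
qed

lemma ln_abs_deriv:
  assumes "u \<noteq> c"
  shows "((\<lambda>u::real. (u - c) * ln \<bar>u - c\<bar> - (u - c)) has_real_derivative ln \<bar>u - c\<bar>) (at u)"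
proof -
  have d: "((\<lambda>u::real. ln \<bar>u - c\<bar>) has_real_derivative 1 / (u - c)) (at u)"
  proof (cases "u > c")
    case True
    have "((\<lambda>u::real. ln (u - c)) has_real_derivative 1 / (u - c)) (at u)"
      using True by (auto intro!: derivative_eq_intros)
    then show ?thesis
      by (rule has_field_derivative_transform_within_open[of _ _ _ "{c<..}"]) (use True in auto)
  next
    case False
    with assms have lt: "u < c" by auto
    have "((\<lambda>u::real. ln (c - u)) has_real_derivative 1 / (u - c)) (at u)"
      using lt by (auto intro!: derivative_eq_intros simp: field_simps)
    then show ?thesis
      by (rule has_field_derivative_transform_within_open[of _ _ _ "{..<c}"]) (use lt in auto)
  qed
  have "((\<lambda>u::real. (u - c) * ln \<bar>u - c\<bar>) has_real_derivative (1 * ln \<bar>u - c\<bar> + 1 / (u - c) * (u - c))) (at u)"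
    by (rule DERIV_mult[OF _ d]) (auto intro!: derivative_eq_intros)
  then have "((\<lambda>u::real. (u - c) * ln \<bar>u - c\<bar> - (u - c)) has_real_derivative (1 * ln \<bar>u - c\<bar> + 1 / (u - c) * (u - c)) - 1) (at u)"
    by (rule DERIV_diff) (auto intro!: derivative_eq_intros)
  then show ?thesis using assms by simp
qed

lemma ln_abs_integrable: "(\<lambda>u::real. ln \<bar>u - c\<bar>) integrable_on {a..b}"
proof (cases "a \<le> b")
  case True
  define F where "F = (\<lambda>u::real. (u - c) * ln \<bar>u - c\<bar> - (u - c))"
  have "((\<lambda>u. ln \<bar>u - c\<bar>) has_integral (F b - F a)) {a..b}"
  proof (rule fundamental_theorem_of_calculus_interior_strong[of "{c}"])
    show "(F has_vector_derivative ln \<bar>x - c\<bar>) (at x)" if "x \<in> {a<..<b} - {c}" for x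
      using ln_abs_deriv[of x c] that unfolding F_def
      by (auto simp: has_real_derivative_iff_has_vector_derivative)
    have "isCont F u" for u
    proof -
      have "isCont (\<lambda>u. (\<lambda>x::real. x * ln \<bar>x\<bar>) (u - c)) u"
        by (rule isCont_o2[OF _ xlnx_isCont]) (intro continuous_intros)
      then show ?thesis unfolding F_def
        by (rule continuous_diff) (intro continuous_intros)
    qed
    then show "continuous_on {a..b} F" by (intro continuous_at_imp_continuous_on) auto
  qed (use True in auto)
  then show ?thesis by blast
next
  case False
  then have "{a..b} = {}" by auto
  then show ?thesis by (simp add: integrable_on_empty)
qed

lemma ln_abs_absint: "(\<lambda>u::real. ln \<bar>u - c\<bar>) absolutely_integrable_on {a..b}"
proof -
  define M where "M = max 0 (ln (\<bar>a - c\<bar> + \<bar>b - c\<bar>))"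
  have le: "ln \<bar>u - c\<bar> \<le> M" if "u \<in> {a..b}" for u
  proof (cases "u = c")
    case True then show ?thesis by (simp add: M_def)
  next
    case False
    have "\<bar>u - c\<bar> \<le> \<bar>a - c\<bar> + \<bar>b - c\<bar>" using that by auto
    then have "ln \<bar>u - c\<bar> \<le> ln (\<bar>a - c\<bar> + \<bar>b - c\<bar>)"
      using False by (subst ln_le_cancel_iff) auto
    then show ?thesis by (simp add: M_def)
  qed
  have "(\<lambda>u. M - ln \<bar>u - c\<bar>) integrable_on {a..b}"
    by (intro integrable_diff ln_abs_integrable integrable_const_ivl)
  then have A: "(\<lambda>u. M - ln \<bar>u - c\<bar>) absolutely_integrable_on {a..b}"
    by (rule nonnegative_absolutely_integrable_1) (use le in auto)
  have B: "(\<lambda>u::real. M) absolutely_integrable_on {a..b}"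
    by (intro absolutely_integrable_continuous_real continuous_on_const)
  have "(\<lambda>u. M - (M - ln \<bar>u - c\<bar>)) absolutely_integrable_on {a..b}"
    using set_integral_diff(1)[OF B A] .
  then show ?thesis by (simp add: integrable_on_empty)
qed

lemma borel_lebesgue_on: "(f::real\<Rightarrow>real) \<in> borel_measurable borel \<Longrightarrow> f \<in> borel_measurable (lebesgue_on S)"
  by (simp add: measurable_completion measurable_restrict_space1)

definition phi :: "real \<Rightarrow> real \<Rightarrow> real" where
  "phi p s = (ln \<bar>s + p\<bar> - ln \<bar>s - p\<bar>) / s"

lemma phi_meas: "phi p \<in> borel_measurable (lebesgue_on S)"
  unfolding phi_def by (rule borel_lebesgue_on) measurable

lemma ln_ratio_bounds:
  fixes a b :: real
  assumes "0 < b" "b \<le> a"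
  shows "0 \<le> ln a - ln b" "ln a - ln b \<le> (a - b) / b"
proof -
  have "ln a - ln b = ln (a / b)" using assms by (simp add: ln_div)
  moreover have "ln (a / b) \<le> a / b - 1" using assms by (intro ln_le_minus_one) auto
  moreover have "a / b - 1 = (a - b) / b" using assms by (simp add: field_simps)
  ultimately show "ln a - ln b \<le> (a - b) / b" by simp
  show "0 \<le> ln a - ln b" using assms by simp
qed

lemma phi_absint_pos:
  assumes p: "p > 0"
  shows "phi p absolutely_integrable_on {0..}"
proof -
  have I1: "phi p absolutely_integrable_on {0..p/2}"
  proof (rule measurable_bounded_by_integrable_imp_absolutely_integrable[OF phi_meas])
    show "(\<lambda>s. 4 / p) integrable_on {0..p/2}" by (rule integrable_const_ivl)
    show "norm (phi p s) \<le> 4 / p" if "s \<in> {0..p/2}" for s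
    proof (cases "s = 0")
      case True then show ?thesis using p by (simp add: phi_def)
    next
      case False
      with that have s: "0 < s" "s \<le> p/2" by auto
      have e1: "\<bar>s + p\<bar> = s + p" "\<bar>s - p\<bar> = p - s" using s p by auto
      have b: "0 \<le> ln (s + p) - ln (p - s)" "ln (s + p) - ln (p - s) \<le> ((s + p) - (p - s)) / (p - s)"
        using ln_ratio_bounds[of "p - s" "s + p"] s p by auto
      have "((s + p) - (p - s)) / (p - s) \<le> 4 * s / p"
        using s p by (simp add: field_simps)
      then have "ln (s + p) - ln (p - s) \<le> 4 * s / p" using b by linarith
      then have "(ln (s + p) - ln (p - s)) / s \<le> 4 / p" using s p by (simp add: field_simps)
      moreover have "0 \<le> (ln (s + p) - ln (p - s)) / s" using b s by simp
      ultimately show ?thesis unfolding phi_def e1 by simp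
    qed
  qed auto
  have I2: "phi p absolutely_integrable_on {p/2..2*p}"
  proof -
    have g: "(\<lambda>s. ln \<bar>s - (-p)\<bar> - ln \<bar>s - p\<bar>) absolutely_integrable_on {p/2..2*p}"
      by (rule set_integral_diff(1)) (intro ln_abs_absint)+
    have "(\<lambda>s. (1 / s) * (ln \<bar>s - (-p)\<bar> - ln \<bar>s - p\<bar>)) absolutely_integrable_on {p/2..2*p}"
    proof (rule absolutely_integrable_bounded_measurable_product_real[OF _ _ _ g])
      show "(\<lambda>s::real. 1 / s) \<in> borel_measurable (lebesgue_on {p/2..2*p})"
        by (rule borel_lebesgue_on) measurable
      show "bounded ((\<lambda>s::real. 1 / s) ` {p/2..2*p})"
        unfolding bounded_iff
      proof (intro exI ballI)
        fix y assume "y \<in> (\<lambda>s::real. 1 / s) ` {p/2..2*p}"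
        then obtain s where s: "s \<in> {p/2..2*p}" "y = 1 / s" by auto
        then have "norm y = 1 / s" using p by auto
        also have "\<dots> \<le> 2 / p" using s p by (simp add: field_simps)
        finally show "norm y \<le> 2 / p" .
      qed
    qed auto
    then show ?thesis by (simp add: phi_def[abs_def])
  qed
  have I3: "phi p absolutely_integrable_on {2*p..}"
  proof (rule measurable_bounded_by_integrable_imp_absolutely_integrable[OF phi_meas])
    have "(\<lambda>s::real. 1 / s ^ 2) integrable_on {2*p..}"
      using has_integral_inverse_power_to_inf[of 2 "2*p"] p by auto
    then show "(\<lambda>s. 4 * p * (1 / s ^ 2)) integrable_on {2*p..}"
      using integrable_on_cmult_left[of "\<lambda>s::real. 1 / s ^ 2" "{2*p..}" "4 * p"] by simp
    show "norm (phi p s) \<le> 4 * p * (1 / s ^ 2)" if "s \<in> {2*p..}" for s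
    proof -
      from that have s: "2 * p \<le> s" by auto
      have e1: "\<bar>s + p\<bar> = s + p" "\<bar>s - p\<bar> = s - p" using s p by auto
      have b: "0 \<le> ln (s + p) - ln (s - p)" "ln (s + p) - ln (s - p) \<le> ((s + p) - (s - p)) / (s - p)"
        using ln_ratio_bounds[of "s - p" "s + p"] s p by auto
      have "((s + p) - (s - p)) / (s - p) \<le> 4 * p / s"
        using s p by (simp add: field_simps)
      then have "ln (s + p) - ln (s - p) \<le> 4 * p / s" using b by linarith
      then have "(ln (s + p) - ln (s - p)) / s \<le> (4 * p / s) / s" using s p
        by (intro divide_right_mono) auto
      also have "(4 * p / s) / s = 4 * p * (1 / s ^ 2)" by (simp add: power2_eq_square)
      finally have "(ln (s + p) - ln (s - p)) / s \<le> 4 * p * (1 / s ^ 2)" .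
      moreover have "0 \<le> (ln (s + p) - ln (s - p)) / s" using b s p by simp
      ultimately show ?thesis unfolding phi_def e1 by simp
    qed
  qed auto
  have "{0..} = {0..p/2} \<union> {p/2..2*p} \<union> {2*p..}" using p by auto
  then show ?thesis using absolutely_integrable_Un[OF absolutely_integrable_Un[OF I1 I2] I3] by simp
qed

lemma phi_neg: "phi (-p) = (\<lambda>s. (-1) * phi p s)"
  by (auto simp: phi_def field_simps)

lemma phi_absint:
  assumes "p \<noteq> 0"
  shows "phi p absolutely_integrable_on {0..}"
proof (cases "p > 0")
  case True then show ?thesis by (rule phi_absint_pos)
next
  case False
  with assms have "-p > 0" by auto
  then have "phi (-p) absolutely_integrable_on {0..}" by (rule phi_absint_pos)
  then have "(\<lambda>s. (-1) * phi (-p) s) absolutely_integrable_on {0..}"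
    using set_integrable_mult_right[of "-1::real" lebesgue "{0..}" "phi (-p)"] by simp
  then show ?thesis using phi_neg[of "-p"] by simp
qed

lemma phi_sub_setint:
  assumes "p \<noteq> 0" "0 \<le> a"
  shows "set_integrable lebesgue {a..} (phi p)"
  by (rule set_integrable_subset[OF phi_absint[OF assms(1)]]) (use assms in auto)

lemma phi_sub_setint2:
  assumes "p \<noteq> 0" "0 \<le> a"
  shows "set_integrable lebesgue {a..b} (phi p)"
  by (rule set_integrable_subset[OF phi_absint[OF assms(1)]]) (use assms in auto)

lemma phi_tail_lim:
  assumes p: "p \<noteq> 0" and a: "0 \<le> a"
  shows "((\<lambda>R. integral {a..R} (phi p)) \<longlongrightarrow> integral {a..} (phi p)) at_top"
proof -
  have A: "set_integrable lebesgue {a..} (phi p)" by (rule phi_sub_setint[OF p a])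
  have "((\<lambda>b. set_lebesgue_integral lebesgue {a..b} (phi p)) \<longlongrightarrow> set_lebesgue_integral lebesgue {a..} (phi p)) at_top"
    by (rule tendsto_set_lebesgue_integral_at_top) (auto simp: A)
  moreover have "\<And>b. set_lebesgue_integral lebesgue {a..b} (phi p) = integral {a..b} (phi p)"
    by (rule set_lebesgue_integral_eq_integral(2)[OF phi_sub_setint2[OF p a]])
  moreover have "set_lebesgue_integral lebesgue {a..} (phi p) = integral {a..} (phi p)"
    by (rule set_lebesgue_integral_eq_integral(2)[OF A])
  ultimately show ?thesis by simp
qed

lemma phi_head_lim:
  assumes p: "p \<noteq> 0"
  shows "((\<lambda>e. integral {e..} (phi p)) \<longlongrightarrow> integral {0..} (phi p)) (at_right 0)"
proof -
  have int0: "phi p integrable_on {0..1}"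
    using set_lebesgue_integral_eq_integral(1)[OF phi_sub_setint2[OF p order.refl, of 1]] by simp
  have "continuous_on {0..1} (\<lambda>x. integral {0..x} (phi p))"
    by (rule indefinite_integral_continuous_1[OF int0])
  then have "((\<lambda>x. integral {0..x} (phi p)) \<longlongrightarrow> integral {0..0} (phi p)) (at_right 0)"
    by (rule continuous_on_Icc_at_rightD) simp
  then have L: "((\<lambda>x. integral {0..} (phi p) - integral {0..x} (phi p)) \<longlongrightarrow> integral {0..} (phi p) - 0) (at_right 0)"
    by (intro tendsto_intros) simp
  have eq: "integral {e..} (phi p) = integral {0..} (phi p) - integral {0..e} (phi p)" if e: "0 \<le> e" for e
  proof -
    have i1: "(phi p has_integral integral {0..e} (phi p)) {0..e}"
      using set_lebesgue_integral_eq_integral(1)[OF phi_sub_setint2[OF p order.refl, of e]] by auto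
    have i2: "(phi p has_integral integral {e..} (phi p)) {e..}"
      using set_lebesgue_integral_eq_integral(1)[OF phi_sub_setint[OF p e]] by auto
    have "(phi p has_integral (integral {0..e} (phi p) + integral {e..} (phi p))) ({0..e} \<union> {e..})"
      by (rule has_integral_Un[OF i1 i2]) (use e in \<open>auto intro: negligible_subset[of "{e}"]\<close>)
    moreover have "{0..e} \<union> {e..} = {0::real..}" using e by auto
    ultimately have "integral {0..} (phi p) = integral {0..e} (phi p) + integral {e..} (phi p)"
      by (simp add: integral_unique)
    then show ?thesis by simp
  qed
  have ev: "\<forall>\<^sub>F x in at_right 0. integral {0..} (phi p) - integral {0..x} (phi p) = integral {x..} (phi p)"
    using eventually_at_right_less[of 0]
  proof eventually_elim
    case (elim x)
    then show ?case using eq[of x] by linarith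
  qed
  show ?thesis
    using Lim_transform_eventually[OF L ev] by simp
qed

lemma ln_abs_deriv1:
  assumes "u \<noteq> c"
  shows "((\<lambda>u::real. ln \<bar>u - c\<bar>) has_real_derivative 1 / (u - c)) (at u)"
proof (cases "u > c")
  case True
  have "((\<lambda>u::real. ln (u - c)) has_real_derivative 1 / (u - c)) (at u)"
    using True by (auto intro!: derivative_eq_intros)
  then show ?thesis
    by (rule has_field_derivative_transform_within_open[of _ _ _ "{c<..}"]) (use True in auto)
next
  case False
  with assms have lt: "u < c" by auto
  have "((\<lambda>u::real. ln (c - u)) has_real_derivative 1 / (u - c)) (at u)"
    using lt by (auto intro!: derivative_eq_intros simp: field_simps)
  then show ?thesis
    by (rule has_field_derivative_transform_within_open[of _ _ _ "{..<c}"]) (use lt in auto)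
qed

lemma ftc_recip:
  fixes u v y :: real
  assumes "u \<le> v" "y \<notin> {u..v}"
  shows "((\<lambda>t. 1 / (y - t)) has_integral (ln \<bar>y - u\<bar> - ln \<bar>y - v\<bar>)) {u..v}"
proof -
  have "((\<lambda>t. 1 / (y - t)) has_integral ((- ln \<bar>v - y\<bar>) - (- ln \<bar>u - y\<bar>))) {u..v}"
  proof (rule fundamental_theorem_of_calculus[OF assms(1), where f="\<lambda>t. - ln \<bar>t - y\<bar>"])
    fix x assume x: "x \<in> {u..v}"
    then have "x \<noteq> y" using assms by auto
    then have "((\<lambda>t. - ln \<bar>t - y\<bar>) has_real_derivative - (1 / (x - y))) (at x)"
      by (intro DERIV_minus ln_abs_deriv1)
    moreover have "- (1 / (x - y)) = 1 / (y - x)" by (metis minus_diff_eq minus_divide_right)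
    ultimately show "((\<lambda>t. - ln \<bar>t - y\<bar>) has_vector_derivative 1 / (y - x)) (at x within {u..v})"
      by (auto simp: has_real_derivative_iff_has_vector_derivative intro: has_vector_derivative_at_within)
  qed
  then show ?thesis by (simp add: abs_minus_commute)
qed

lemma trunc_ind:
  fixes \<alpha> \<beta> y \<epsilon> R :: real
  assumes ab: "\<alpha> < \<beta>" and e: "0 < \<epsilon>" "\<epsilon> < \<bar>y - \<alpha>\<bar>" "\<epsilon> < \<bar>y - \<beta>\<bar>"
    and R: "\<bar>y - \<alpha>\<bar> \<le> R" "\<bar>y - \<beta>\<bar> \<le> R"
  shows "((\<lambda>t. indicator {\<alpha>..\<beta>} t / (y - t)) has_integral (ln \<bar>y - \<alpha>\<bar> - ln \<bar>y - \<beta>\<bar>))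
           {t. \<epsilon> \<le> \<bar>y - t\<bar> \<and> \<bar>y - t\<bar> \<le> R}"
proof -
  let ?A = "{t. \<epsilon> \<le> \<bar>y - t\<bar> \<and> \<bar>y - t\<bar> \<le> R}"
  have eqf: "(\<lambda>t. indicator {\<alpha>..\<beta>} t / (y - t)) = (\<lambda>t. if t \<in> {\<alpha>..\<beta>} then 1 / (y - t) else 0)"
    by (auto simp: indicator_def)
  have main: "((\<lambda>t. 1 / (y - t)) has_integral (ln \<bar>y - \<alpha>\<bar> - ln \<bar>y - \<beta>\<bar>)) ({\<alpha>..\<beta>} \<inter> ?A)"
  proof (cases "y < \<alpha> \<or> y > \<beta>")
    case True
    have "{\<alpha>..\<beta>} \<inter> ?A = {\<alpha>..\<beta>}" using True e R ab by auto
    then show ?thesis using ftc_recip[of \<alpha> \<beta> y] True ab by auto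
  next
    case False
    then have y: "\<alpha> < y" "y < \<beta>" using e by auto
    have i1: "((\<lambda>t. 1 / (y - t)) has_integral (ln \<bar>y - \<alpha>\<bar> - ln \<bar>y - (y - \<epsilon>)\<bar>)) {\<alpha>..y - \<epsilon>}"
      using ftc_recip[of \<alpha> "y - \<epsilon>" y] e y by auto
    have i2: "((\<lambda>t. 1 / (y - t)) has_integral (ln \<bar>y - (y + \<epsilon>)\<bar> - ln \<bar>y - \<beta>\<bar>)) {y + \<epsilon>..\<beta>}"
      using ftc_recip[of "y + \<epsilon>" \<beta> y] e y by auto
    have "((\<lambda>t. 1 / (y - t)) has_integral ((ln \<bar>y - \<alpha>\<bar> - ln \<bar>y - (y - \<epsilon>)\<bar>) + (ln \<bar>y - (y + \<epsilon>)\<bar> - ln \<bar>y - \<beta>\<bar>)))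
        ({\<alpha>..y - \<epsilon>} \<union> {y + \<epsilon>..\<beta>})"
      by (rule has_integral_Un[OF i1 i2]) (use e in auto)
    moreover have "{\<alpha>..\<beta>} \<inter> ?A = {\<alpha>..y - \<epsilon>} \<union> {y + \<epsilon>..\<beta>}" using y e R by auto
    ultimately show ?thesis by simp
  qed
  show ?thesis unfolding eqf by (subst has_integral_restrict_Int) (rule main)
qed

lemma Lim_eventually_const:
  assumes "F \<noteq> bot" "eventually (\<lambda>x. f x = (c::real)) F"
  shows "Lim F f = c"
  using assms by (intro tendsto_Lim tendsto_eventually) auto

lemma hilbert_step:
  fixes K :: "'a set" and a \<alpha> \<beta> :: "'a \<Rightarrow> real" and y :: real
  assumes K: "finite K" and ab: "\<forall>k\<in>K. \<alpha> k < \<beta> k" and y: "\<forall>k\<in>K. y \<noteq> \<alpha> k \<and> y \<noteq> \<beta> k"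
  shows "hilbert (\<lambda>t. \<Sum>k\<in>K. a k * indicator {\<alpha> k..\<beta> k} t) y
         = (1 / pi) * (\<Sum>k\<in>K. a k * (ln \<bar>y - \<alpha> k\<bar> - ln \<bar>y - \<beta> k\<bar>))"
proof -
  define S where "S = (\<Sum>k\<in>K. a k * (ln \<bar>y - \<alpha> k\<bar> - ln \<bar>y - \<beta> k\<bar>))"
  define f where "f = (\<lambda>t. \<Sum>k\<in>K. a k * indicator {\<alpha> k..\<beta> k} t :: real)"
  have key: "hilbert_trunc f y e R = S"
    if e: "0 < e" "\<forall>k\<in>K. e < \<bar>y - \<alpha> k\<bar> \<and> e < \<bar>y - \<beta> k\<bar>"
      and R: "\<forall>k\<in>K. \<bar>y - \<alpha> k\<bar> \<le> R \<and> \<bar>y - \<beta> k\<bar> \<le> R" for e R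
  proof -
    have "((\<lambda>t. \<Sum>k\<in>K. a k * (indicator {\<alpha> k..\<beta> k} t / (y - t))) has_integral S)
            {t. e \<le> \<bar>y - t\<bar> \<and> \<bar>y - t\<bar> \<le> R}"
      unfolding S_def
      by (intro has_integral_sum K has_integral_mult_right trunc_ind) (use e R ab in auto)
    moreover have "(\<lambda>t. f t / (y - t)) = (\<lambda>t. \<Sum>k\<in>K. a k * (indicator {\<alpha> k..\<beta> k} t / (y - t)))"
      by (auto simp: f_def sum_divide_distrib)
    ultimately show ?thesis unfolding hilbert_trunc_def by (simp add: integral_unique)
  qed
  have inner: "Lim at_top (\<lambda>R. hilbert_trunc f y e R) = S"
    if e: "0 < e" "\<forall>k\<in>K. e < \<bar>y - \<alpha> k\<bar> \<and> e < \<bar>y - \<beta> k\<bar>" for e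
  proof (rule Lim_eventually_const)
    have "\<forall>\<^sub>F R in at_top. \<forall>k\<in>K. \<bar>y - \<alpha> k\<bar> \<le> R \<and> \<bar>y - \<beta> k\<bar> \<le> R"
      using K by (intro eventually_ball_finite ballI eventually_conj eventually_ge_at_top) auto
    then show "\<forall>\<^sub>F R in at_top. hilbert_trunc f y e R = S"
      by eventually_elim (rule key[OF e])
  qed simp
  have "\<forall>\<^sub>F e in at_right 0. 0 < e \<and> (\<forall>k\<in>K. e < \<bar>y - \<alpha> k\<bar> \<and> e < \<bar>y - \<beta> k\<bar>)"
  proof -
    have "\<forall>\<^sub>F e in at_right 0. \<forall>k\<in>K. e < \<bar>y - \<alpha> k\<bar> \<and> e < \<bar>y - \<beta> k\<bar>"
    proof (rule eventually_ball_finite[OF K], rule ballI)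
      fix k assume "k \<in> K"
      then have "0 < \<bar>y - \<alpha> k\<bar>" "0 < \<bar>y - \<beta> k\<bar>" using y by auto
      then show "\<forall>\<^sub>F e in at_right 0. e < \<bar>y - \<alpha> k\<bar> \<and> e < \<bar>y - \<beta> k\<bar>"
        by (intro eventually_conj order_tendstoD(2)[OF tendsto_ident_at])
    qed
    moreover have "\<forall>\<^sub>F e in at_right 0. 0 < (e::real)" by (rule eventually_at_right_less)
    ultimately show ?thesis by eventually_elim auto
  qed
  then have "\<forall>\<^sub>F e in at_right 0. Lim at_top (\<lambda>R. hilbert_trunc f y e R) = S"
    by eventually_elim (use inner in auto)
  then have "Lim (at_right 0) (\<lambda>e. Lim at_top (\<lambda>R. hilbert_trunc f y e R)) = S"
    by (intro Lim_eventually_const) auto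
  then show ?thesis unfolding hilbert_def S_def f_def by simp
qed

lemma lnrec_absint:
  fixes c e R :: real
  assumes "0 < e"
  shows "(\<lambda>s. ln \<bar>s - c\<bar> / s) absolutely_integrable_on {e..R}"
proof -
  have g: "(\<lambda>s. ln \<bar>s - c\<bar>) absolutely_integrable_on {e..R}" by (rule ln_abs_absint)
  have "(\<lambda>s. (1 / s) * ln \<bar>s - c\<bar>) absolutely_integrable_on {e..R}"
  proof (rule absolutely_integrable_bounded_measurable_product_real[OF _ _ _ g])
    show "(\<lambda>s::real. 1 / s) \<in> borel_measurable (lebesgue_on {e..R})"
      by (rule borel_lebesgue_on) measurable
    show "bounded ((\<lambda>s::real. 1 / s) ` {e..R})"
      unfolding bounded_iff
    proof (intro exI ballI)
      fix y assume "y \<in> (\<lambda>s::real. 1 / s) ` {e..R}"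
      then obtain s where s: "s \<in> {e..R}" "y = 1 / s" by auto
      then have "norm y = 1 / s" using assms by auto
      also have "\<dots> \<le> 1 / e" using s assms by (simp add: field_simps)
      finally show "norm y \<le> 1 / e" .
    qed
  qed auto
  then show ?thesis by simp
qed

lemma lnrec_int: "0 < (e::real) \<Longrightarrow> (\<lambda>s. ln \<bar>s - c\<bar> / s) integrable_on {e..R}"
  using lnrec_absint set_lebesgue_integral_eq_integral(1) by blast

lemma phi_int: "0 < (e::real) \<Longrightarrow> phi p integrable_on {e..R}"
proof -
  assume e: "0 < e"
  have "(\<lambda>s. ln \<bar>s - (-p)\<bar> / s - ln \<bar>s - p\<bar> / s) integrable_on {e..R}"
    by (intro integrable_diff lnrec_int e)
  then show ?thesis by (simp add: phi_def[abs_def] diff_divide_distrib)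
qed

lemma Jc:
  fixes x c e R :: real
  assumes e: "0 < e" "e \<le> R"
  shows "((\<lambda>t. ln \<bar>t - c\<bar> / (x - t)) has_integral (- integral {e..R} (phi (x - c))))
           {t. e \<le> \<bar>x - t\<bar> \<and> \<bar>x - t\<bar> \<le> R}"
proof -
  define p where "p = x - c"
  define f where "f = (\<lambda>t. ln \<bar>t - c\<bar> / (x - t))"
  define I1 where "I1 = integral {e..R} (\<lambda>s. - (ln \<bar>s - (-p)\<bar> / s))"
  define I2 where "I2 = integral {e..R} (\<lambda>s. ln \<bar>s - p\<bar> / s)"
  have h1: "((\<lambda>s. - (ln \<bar>s - (-p)\<bar> / s)) has_integral I1) {e..R}"
    unfolding I1_def by (intro integrable_integral integrable_neg lnrec_int e)
  have h2: "((\<lambda>s. ln \<bar>s - p\<bar> / s) has_integral I2) {e..R}"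
    unfolding I2_def by (intro integrable_integral lnrec_int e)
  have "f \<circ> (+) x = (\<lambda>s. - (ln \<bar>s - (-p)\<bar> / s))"
    by (auto simp: f_def p_def o_def algebra_simps)
  then have r: "(f has_integral I1) {e + x..R + x}"
    using h1 has_integral_shift_Icc_real[of f x I1 e R] by simp
  have "(\<lambda>s. (f \<circ> (+) x) (- s)) = (\<lambda>s. ln \<bar>s - p\<bar> / s)"
    by (auto simp: f_def p_def o_def algebra_simps abs_minus_commute)
  then have "((f \<circ> (+) x) has_integral I2) {-R..-e}"
    using h2 has_integral_reflect_real[of "f \<circ> (+) x" I2 "-e" "-R"] by simp
  then have l: "(f has_integral I2) {-R + x..-e + x}"
    using has_integral_shift_Icc_real[of f x I2 "-R" "-e"] by simp
  have u: "(f has_integral (I2 + I1)) ({-R + x..-e + x} \<union> {e + x..R + x})"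
    by (rule has_integral_Un[OF l r]) (use e in auto)
  have seteq: "{-R + x..-e + x} \<union> {e + x..R + x} = {t. e \<le> \<bar>x - t\<bar> \<and> \<bar>x - t\<bar> \<le> R}"
    using e by auto
  have "((\<lambda>s. - (ln \<bar>s - (-p)\<bar> / s) + ln \<bar>s - p\<bar> / s) has_integral (I1 + I2)) {e..R}"
    by (rule has_integral_add[OF h1 h2])
  moreover have "(\<lambda>s. - (ln \<bar>s - (-p)\<bar> / s) + ln \<bar>s - p\<bar> / s) = (\<lambda>s. - phi p s)"
    by (auto simp: phi_def diff_divide_distrib)
  moreover have "((\<lambda>s. - phi p s) has_integral (- integral {e..R} (phi p))) {e..R}"
    by (intro has_integral_neg integrable_integral phi_int e)
  ultimately have "I1 + I2 = - integral {e..R} (phi p)"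
    using has_integral_unique by auto
  then show ?thesis using u seteq unfolding f_def p_def by (simp add: add.commute)
qed

lemma hilbert_g_conv:
  fixes K :: "'a set" and a \<alpha> \<beta> :: "'a \<Rightarrow> real" and g :: "real \<Rightarrow> real" and E :: "real set" and x :: real
  assumes K: "finite K" and E: "finite E"
    and gE: "\<And>t. t \<notin> E \<Longrightarrow> g t = (1 / pi) * (\<Sum>k\<in>K. a k * (ln \<bar>t - \<alpha> k\<bar> - ln \<bar>t - \<beta> k\<bar>))"
    and x: "\<forall>k\<in>K. x \<noteq> \<alpha> k \<and> x \<noteq> \<beta> k"
  shows "\<forall>e>0. ((\<lambda>R. hilbert_trunc g x e R) \<longlongrightarrow> Lim at_top (\<lambda>R. hilbert_trunc g x e R)) at_top"
    and "\<exists>M. ((\<lambda>e. Lim at_top (\<lambda>R. hilbert_trunc g x e R)) \<longlongrightarrow> M) (at_right 0)"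
proof -
  define T where "T = (\<lambda>e R. (1 / pi) * (\<Sum>k\<in>K. a k * ((- integral {e..R} (phi (x - \<alpha> k))) - (- integral {e..R} (phi (x - \<beta> k))))))"
  define U where "U = (\<lambda>e. (1 / pi) * (\<Sum>k\<in>K. a k * ((- integral {e..} (phi (x - \<alpha> k))) - (- integral {e..} (phi (x - \<beta> k))))))"
  have pa: "x - \<alpha> k \<noteq> 0" "x - \<beta> k \<noteq> 0" if "k \<in> K" for k using x that by auto
  have eqT: "hilbert_trunc g x e R = T e R" if e: "0 < e" "e \<le> R" for e R
  proof -
    let ?A = "{t. e \<le> \<bar>x - t\<bar> \<and> \<bar>x - t\<bar> \<le> R}"
    let ?G = "\<lambda>t. (1 / pi) * (\<Sum>k\<in>K. a k * (ln \<bar>t - \<alpha> k\<bar> / (x - t) - ln \<bar>t - \<beta> k\<bar> / (x - t)))"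
    have "(?G has_integral T e R) ?A"
      unfolding T_def
      by (intro has_integral_mult_right has_integral_sum K has_integral_diff Jc e)
    moreover have "g t / (x - t) = ?G t" if "t \<in> ?A - E" for t
      using gE[of t] that by (simp add: sum_divide_distrib diff_divide_distrib algebra_simps)
    ultimately have "((\<lambda>t. g t / (x - t)) has_integral T e R) ?A"
      by (rule has_integral_spike_finite[OF E, rotated])
    then show ?thesis unfolding hilbert_trunc_def by (rule integral_unique)
  qed
  have limR: "((\<lambda>R. hilbert_trunc g x e R) \<longlongrightarrow> U e) at_top" if e: "0 < e" for e
  proof -
    have "((\<lambda>R. T e R) \<longlongrightarrow> U e) at_top"
      unfolding T_def U_def
      using e pa by (intro tendsto_intros phi_tail_lim) auto
    moreover have "\<forall>\<^sub>F R in at_top. T e R = hilbert_trunc g x e R"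
      using eventually_ge_at_top[of e] by eventually_elim (use eqT e in auto)
    ultimately show ?thesis by (rule Lim_transform_eventually)
  qed
  have LimU: "Lim at_top (\<lambda>R. hilbert_trunc g x e R) = U e" if "0 < e" for e
    using limR[OF that] by (intro tendsto_Lim) auto
  show "\<forall>e>0. ((\<lambda>R. hilbert_trunc g x e R) \<longlongrightarrow> Lim at_top (\<lambda>R. hilbert_trunc g x e R)) at_top"
    using limR LimU by auto
  have "(U \<longlongrightarrow> U 0) (at_right 0)"
    unfolding U_def using pa by (intro tendsto_intros phi_head_lim) auto
  moreover have "\<forall>\<^sub>F e in at_right 0. U e = Lim at_top (\<lambda>R. hilbert_trunc g x e R)"
    using eventually_at_right_less[of 0] by eventually_elim (use LimU in auto)
  ultimately have "((\<lambda>e. Lim at_top (\<lambda>R. hilbert_trunc g x e R)) \<longlongrightarrow> U 0) (at_right 0)"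
    by (rule Lim_transform_eventually)
  then show "\<exists>M. ((\<lambda>e. Lim at_top (\<lambda>R. hilbert_trunc g x e R)) \<longlongrightarrow> M) (at_right 0)" by blast
qed



lemma img_scale:
  fixes m a b :: real
  assumes "m \<noteq> 0" "a \<le> b"
  shows "(\<lambda>x. x / m) ` {min (m*a) (m*b)..max (m*a) (m*b)} = {a..b}"
proof (cases "m > 0")
  case True
  have mm: "min (m*a) (m*b) = m * a" "max (m*a) (m*b) = m * b" using True assms by auto
  show ?thesis unfolding mm
  proof safe
    fix x assume "x \<in> {m*a..m*b}" then show "x / m \<in> {a..b}" using True by (auto simp: field_simps)
  next
    fix x assume "x \<in> {a..b}"
    then have "m * x \<in> {m*a..m*b}" using True by (auto intro: mult_left_mono)
    moreover have "x = (m * x) / m" using True by simp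
    ultimately show "x \<in> (\<lambda>x. x / m) ` {m*a..m*b}" by blast
  qed
next
  case False
  with assms have m: "m < 0" by auto
  have mm: "min (m*a) (m*b) = m * b" "max (m*a) (m*b) = m * a" using m assms
    by (auto simp: mult_left_mono_neg)
  show ?thesis unfolding mm
  proof safe
    fix x assume "x \<in> {m*b..m*a}" then show "x / m \<in> {a..b}" using m by (auto simp: field_simps)
  next
    fix x assume "x \<in> {a..b}"
    then have "m * x \<in> {m*b..m*a}" using m by (auto intro: mult_left_mono_neg)
    moreover have "x = (m * x) / m" using m by simp
    ultimately show "x \<in> (\<lambda>x. x / m) ` {m*b..m*a}" by blast
  qed
qed

lemma has_integral_scale_UNIV:
  fixes f :: "real \<Rightarrow> real"
  assumes m: "m \<noteq> 0" and f: "(f has_integral i) UNIV"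
  shows "((\<lambda>x. f (m * x)) has_integral (i / \<bar>m\<bar>)) UNIV"
proof -
  from f have fi: "\<And>a b. f integrable_on {a..b}"
    and fl: "\<And>e. e > 0 \<Longrightarrow> \<exists>B>0. \<forall>a b. ball 0 B \<subseteq> {a..b} \<longrightarrow> \<bar>integral {a..b} f - i\<bar> < e"
    using has_integral_alt'[of f i UNIV] by auto
  define c where "c = (\<lambda>a b. min (m*a) (m*b))"
  define d where "d = (\<lambda>a b. max (m*a) (m*b))"
  have eqint: "integral {a..b} (\<lambda>x. f (m * x)) = integral {c a b..d a b} f / \<bar>m\<bar>" if "a \<le> b" for a b
    using integral_stretch_real[OF m, of "c a b" "d a b" f] img_scale[OF m that]
    by (simp add: c_def d_def)
  have gi: "(\<lambda>x. f (m * x)) integrable_on {a..b}" for a b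
  proof (cases "a \<le> b")
    case True
    then show ?thesis
      using integrable_stretch_real[OF fi[of "c a b" "d a b"] m] img_scale[OF m True]
      by (simp add: c_def d_def)
  next
    case False
    then have "{a..b} = {}" by auto
    then show ?thesis by (simp add: integrable_on_empty)
  qed
  show ?thesis
    unfolding has_integral_alt'[of _ _ UNIV]
  proof (intro conjI allI impI)
    show "(\<lambda>x. if x \<in> UNIV then f (m * x) else 0) integrable_on cbox a b" for a b
      using gi[of a b] by simp
    fix e :: real assume e: "e > 0"
    then have "e * \<bar>m\<bar> > 0" using m by simp
    from fl[OF this] obtain B where B: "B > 0" "\<And>a b. ball 0 B \<subseteq> {a..b} \<Longrightarrow> \<bar>integral {a..b} f - i\<bar> < e * \<bar>m\<bar>"
      by auto
    show "\<exists>B>0. \<forall>a b. ball 0 B \<subseteq> cbox a b \<longrightarrow>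
            norm (integral (cbox a b) (\<lambda>x. if x \<in> UNIV then f (m * x) else 0) - i / \<bar>m\<bar>) < e"
    proof (intro exI[of _ "B / \<bar>m\<bar>"] conjI allI impI)
      show "B / \<bar>m\<bar> > 0" using B m by simp
      fix a b :: real assume sub: "ball 0 (B / \<bar>m\<bar>) \<subseteq> cbox a b"
      have "0 \<in> cbox a b" using sub centre_in_ball[of 0 "B / \<bar>m\<bar>"] \<open>B / \<bar>m\<bar> > 0\<close> by blast
      then have ab: "a \<le> b" by simp
      have sub2: "ball 0 B \<subseteq> {c a b..d a b}"
      proof
        fix y :: real assume y: "y \<in> ball 0 B"
        have "y / m \<in> ball 0 (B / \<bar>m\<bar>)" using y m by (simp add: abs_divide divide_strict_right_mono)
        then have "y / m \<in> {a..b}" using sub by (metis subsetD cbox_interval)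
        then have yab: "a \<le> y / m" "y / m \<le> b" by auto
        show "y \<in> {c a b..d a b}"
        proof (cases "m > 0")
          case True
          then have "a * m \<le> y" "y \<le> b * m" using yab by (simp_all add: pos_le_divide_eq pos_divide_le_eq)
          then show ?thesis by (auto simp: c_def d_def mult.commute)
        next
          case False
          with m have mn: "m < 0" by auto
          then have "y \<le> a * m" "b * m \<le> y" using yab by (simp_all add: neg_le_divide_eq neg_divide_le_eq)
          then show ?thesis by (auto simp: c_def d_def mult.commute)
        qed
      qed
      have "\<bar>integral {a..b} (\<lambda>x. f (m * x)) - i / \<bar>m\<bar>\<bar> = \<bar>integral {c a b..d a b} f - i\<bar> / \<bar>m\<bar>"
        using eqint[OF ab] m by (simp add: diff_divide_distrib[symmetric] abs_divide)
      also have "\<dots> < e" using B(2)[OF sub2] m by (simp add: field_simps)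
      finally show "norm (integral (cbox a b) (\<lambda>x. if x \<in> UNIV then f (m * x) else 0) - i / \<bar>m\<bar>) < e"
        by simp
    qed
  qed
qed

lemma integral_scale_UNIV:
  fixes f :: "real \<Rightarrow> real"
  assumes m: "m \<noteq> 0"
  shows "integral UNIV (\<lambda>x. f (m * x)) = integral UNIV f / \<bar>m\<bar>"
proof (cases "f integrable_on UNIV")
  case True
  then show ?thesis using has_integral_scale_UNIV[OF m] by (blast intro: integral_unique)
next
  case False
  have "\<not> (\<lambda>x. f (m * x)) integrable_on UNIV"
  proof
    assume "(\<lambda>x. f (m * x)) integrable_on UNIV"
    then obtain j where "((\<lambda>x. f (m * x)) has_integral j) UNIV" by blast
    from has_integral_scale_UNIV[OF _ this, of "1 / m"] m
    have "((\<lambda>x. f (m * (1 / m * x))) has_integral (j / \<bar>1/m\<bar>)) UNIV" by simp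
    then have "f integrable_on UNIV" using m by auto
    with False show False by simp
  qed
  with False show ?thesis by (simp add: not_integrable_integral)
qed

lemma trunc_scale:
  fixes g :: "real \<Rightarrow> real" and w t e R :: real
  assumes w: "w \<noteq> 0"
  shows "hilbert_trunc (\<lambda>s. g (s / w)) t e R = sgn w * hilbert_trunc g (t / w) (e / \<bar>w\<bar>) (R / \<bar>w\<bar>)"
proof -
  define S where "S = {s. e \<le> \<bar>t - s\<bar> \<and> \<bar>t - s\<bar> \<le> R}"
  define S' where "S' = {u. e / \<bar>w\<bar> \<le> \<bar>t / w - u\<bar> \<and> \<bar>t / w - u\<bar> \<le> R / \<bar>w\<bar>}"
  define k where "k = (\<lambda>u. if u \<in> S' then g u / (t / w - u) else 0)"
  have mem: "s \<in> S \<longleftrightarrow> s / w \<in> S'" for s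
  proof -
    have eq: "\<bar>t - s\<bar> = \<bar>w\<bar> * \<bar>t / w - s / w\<bar>"
      using w by (simp add: abs_mult[symmetric] right_diff_distrib)
    have aw: "\<bar>w\<bar> > 0" using w by simp
    show ?thesis unfolding S_def S'_def
      using aw by (simp add: eq pos_divide_le_eq pos_le_divide_eq mult.commute)
  qed
  have fun_eq: "(\<lambda>s. if s \<in> S then g (s / w) / (t - s) else 0) = (\<lambda>s. (1 / w) * k ((1 / w) * s))"
  proof
    fix s
    have "t - s = w * (t / w - s / w)" using w by (simp add: right_diff_distrib)
    then show "(if s \<in> S then g (s / w) / (t - s) else 0) = (1 / w) * k ((1 / w) * s)"
      unfolding k_def using mem[of s] by simp
  qed
  have "hilbert_trunc (\<lambda>s. g (s / w)) t e R = integral UNIV (\<lambda>s. if s \<in> S then g (s / w) / (t - s) else 0)"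
    unfolding integral_restrict_UNIV by (simp add: hilbert_trunc_def S_def)
  also have "\<dots> = (1 / w) * integral UNIV (\<lambda>s. k ((1 / w) * s))"
    unfolding fun_eq by simp
  also have "\<dots> = (1 / w) * (integral UNIV k / \<bar>1 / w\<bar>)"
    using integral_scale_UNIV[of "1 / w" k] w by simp
  also have "integral UNIV k = hilbert_trunc g (t / w) (e / \<bar>w\<bar>) (R / \<bar>w\<bar>)"
    unfolding k_def integral_restrict_UNIV by (simp add: hilbert_trunc_def S'_def)
  also have "(1 / w) * (hilbert_trunc g (t / w) (e / \<bar>w\<bar>) (R / \<bar>w\<bar>) / \<bar>1 / w\<bar>)
           = sgn w * hilbert_trunc g (t / w) (e / \<bar>w\<bar>) (R / \<bar>w\<bar>)"
    using w by (cases "w > 0") (auto simp: sgn_real_def abs_divide)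
  finally show ?thesis .
qed

lemma hilbert_scale:
  fixes g :: "real \<Rightarrow> real" and w t y M :: real
  assumes w: "w \<noteq> 0"
    and c1: "\<forall>e>0. ((\<lambda>R. hilbert_trunc g y e R) \<longlongrightarrow> Lim at_top (\<lambda>R. hilbert_trunc g y e R)) at_top"
    and c2: "((\<lambda>e. Lim at_top (\<lambda>R. hilbert_trunc g y e R)) \<longlongrightarrow> M) (at_right 0)"
    and y: "y = t / w"
  shows "hilbert (\<lambda>s. g (s / w)) t = sgn w * hilbert g y"
proof -
  define L where "L = (\<lambda>e. Lim at_top (\<lambda>R. hilbert_trunc g y e R))"
  have aw: "\<bar>w\<bar> > 0" using w by simp
  have fR: "filterlim (\<lambda>R. R / \<bar>w\<bar>) at_top at_top"
    unfolding filterlim_at_top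
  proof
    fix Z :: real
    show "\<forall>\<^sub>F R in at_top. Z \<le> R / \<bar>w\<bar>"
      using eventually_ge_at_top[of "Z * \<bar>w\<bar>"] by eventually_elim (use aw in \<open>simp add: pos_le_divide_eq\<close>)
  qed
  have fe: "filterlim (\<lambda>e. e / \<bar>w\<bar>) (at_right 0) (at_right 0)"
  proof (rule tendsto_imp_filterlim_at_right)
    have "((\<lambda>e::real. e / \<bar>w\<bar>) \<longlongrightarrow> 0 / \<bar>w\<bar>) (at_right 0)"
      by (intro tendsto_intros) (use w in auto)
    then show "((\<lambda>e::real. e / \<bar>w\<bar>) \<longlongrightarrow> 0) (at_right 0)" by simp
    show "\<forall>\<^sub>F e in at_right 0. e / \<bar>w\<bar> > 0"
      using eventually_at_right_less[of 0] by eventually_elim (use aw in auto)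
  qed
  have inner: "Lim at_top (\<lambda>R. hilbert_trunc (\<lambda>s. g (s / w)) t e R) = sgn w * L (e / \<bar>w\<bar>)" if e: "e > 0" for e
  proof (rule tendsto_Lim)
    have "e / \<bar>w\<bar> > 0" using e aw by simp
    then have "((\<lambda>R. hilbert_trunc g y (e / \<bar>w\<bar>) R) \<longlongrightarrow> L (e / \<bar>w\<bar>)) at_top"
      using c1 unfolding L_def by auto
    then have "((\<lambda>R. hilbert_trunc g y (e / \<bar>w\<bar>) (R / \<bar>w\<bar>)) \<longlongrightarrow> L (e / \<bar>w\<bar>)) at_top"
      by (rule filterlim_compose[OF _ fR])
    then have "((\<lambda>R. sgn w * hilbert_trunc g y (e / \<bar>w\<bar>) (R / \<bar>w\<bar>)) \<longlongrightarrow> sgn w * L (e / \<bar>w\<bar>)) at_top"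
      by (intro tendsto_intros)
    then show "((\<lambda>R. hilbert_trunc (\<lambda>s. g (s / w)) t e R) \<longlongrightarrow> sgn w * L (e / \<bar>w\<bar>)) at_top"
      by (simp add: trunc_scale[OF w] y)
  qed simp
  have "((\<lambda>e. L (e / \<bar>w\<bar>)) \<longlongrightarrow> M) (at_right 0)"
    using filterlim_compose[OF c2[folded L_def] fe] .
  then have "((\<lambda>e. sgn w * L (e / \<bar>w\<bar>)) \<longlongrightarrow> sgn w * M) (at_right 0)"
    by (intro tendsto_intros)
  moreover have "\<forall>\<^sub>F e in at_right 0. sgn w * L (e / \<bar>w\<bar>) = Lim at_top (\<lambda>R. hilbert_trunc (\<lambda>s. g (s / w)) t e R)"
    using eventually_at_right_less[of 0] by eventually_elim (use inner in auto)
  ultimately have "((\<lambda>e. Lim at_top (\<lambda>R. hilbert_trunc (\<lambda>s. g (s / w)) t e R)) \<longlongrightarrow> sgn w * M) (at_right 0)"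
    by (rule Lim_transform_eventually)
  then have l1: "Lim (at_right 0) (\<lambda>e. Lim at_top (\<lambda>R. hilbert_trunc (\<lambda>s. g (s / w)) t e R)) = sgn w * M"
    by (intro tendsto_Lim) auto
  have l2: "Lim (at_right 0) L = M" using c2[folded L_def] by (intro tendsto_Lim) auto
  show ?thesis unfolding hilbert_def l1 using l2 unfolding L_def by simp
qed


lemma phi_jk_ind:
  "phi_jk j k t = indicator {real_of_int k / 2 powr real_of_int j .. (real_of_int k + 1) / 2 powr real_of_int j} t"
proof -
  define c where "c = (2::real) powr real_of_int j"
  have c: "c > 0" unfolding c_def by simp
  have "(0 \<le> c * t - real_of_int k \<and> c * t - real_of_int k \<le> 1) \<longleftrightarrow>
        (real_of_int k / c \<le> t \<and> t \<le> (real_of_int k + 1) / c)"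
    using c by (simp add: pos_divide_le_eq pos_le_divide_eq mult.commute algebra_simps)
  then show ?thesis
    unfolding phi_jk_def haar_phi_def c_def[symmetric] by (simp add: indicator_def)
qed

theorem proposition2:
  fixes n :: nat and j :: int and g :: "real \<Rightarrow> real" and \<omega> :: real
  assumes "n \<ge> 1"
    and "g \<in> hilbert ` Vplus j"
  shows "\<i> * complex_of_real (sn_integral n g \<omega>)
         = \<i> * complex_of_real (sgn \<omega>) * complex_of_real (integral UNIV (\<lambda>t. cn n (\<omega> * t) * hilbert g t))"
proof -
  obtain f where fV: "f \<in> Vplus j" and gf: "g = hilbert f" using assms(2) by auto
  from fV obtain K a where K: "finite K" and f: "f = (\<lambda>t. \<Sum>k\<in>K. a k * phi_jk j k t)"
    unfolding Vplus_def V_def by auto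
  define \<alpha> where "\<alpha> = (\<lambda>k::int. real_of_int k / 2 powr real_of_int j)"
  define \<beta> where "\<beta> = (\<lambda>k::int. (real_of_int k + 1) / 2 powr real_of_int j)"
  have ab: "\<forall>k\<in>K. \<alpha> k < \<beta> k"
    unfolding \<alpha>_def \<beta>_def by (auto simp: divide_strict_right_mono)
  have f2: "f = (\<lambda>t. \<Sum>k\<in>K. a k * indicator {\<alpha> k..\<beta> k} t)"
    unfolding f \<alpha>_def \<beta>_def by (simp add: phi_jk_ind)
  define E where "E = \<alpha> ` K \<union> \<beta> ` K"
  have E: "finite E" unfolding E_def using K by auto
  have notE: "\<forall>k\<in>K. x \<noteq> \<alpha> k \<and> x \<noteq> \<beta> k" if "x \<notin> E" for x
    using that unfolding E_def by auto
  have gE: "g t = (1 / pi) * (\<Sum>k\<in>K. a k * (ln \<bar>t - \<alpha> k\<bar> - ln \<bar>t - \<beta> k\<bar>))" if "t \<notin> E" for t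
    unfolding gf f2 by (rule hilbert_step[OF K ab notE[OF that]])
  show ?thesis
  proof (cases "\<omega> = 0")
    case True
    then show ?thesis by (simp add: sn_integral_def)
  next
    case False
    define w where "w = \<omega>"
    have w: "w \<noteq> 0" using False w_def by simp
    have hs: "hilbert (\<lambda>s. g (s / w)) t = sgn w * hilbert g (t / w)" if "t / w \<notin> E" for t
    proof -
      have nE: "\<forall>k\<in>K. t / w \<noteq> \<alpha> k \<and> t / w \<noteq> \<beta> k" using notE[OF that] .
      note conv = hilbert_g_conv[OF K E gE nE]
      from conv(2) obtain M where M: "((\<lambda>e. Lim at_top (\<lambda>R. hilbert_trunc g (t / w) e R)) \<longlongrightarrow> M) (at_right 0)"
        by blast
      show ?thesis by (rule hilbert_scale[OF w conv(1) M refl])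
    qed
    define Kf where "Kf = (\<lambda>u. cn n (w * u) * hilbert g u)"
    have "integral UNIV (\<lambda>t. cn n t * hilbert (\<lambda>s. g (s / w)) t)
        = integral UNIV (\<lambda>t. sgn w * Kf ((1 / w) * t))"
    proof (rule integral_spike[of "(\<lambda>u. w * u) ` E"])
      show "negligible ((\<lambda>u. w * u) ` E)" using E by auto
      fix t assume t: "t \<in> UNIV - (\<lambda>u. w * u) ` E"
      have "t / w \<notin> E"
      proof
        assume "t / w \<in> E"
        moreover have "t = w * (t / w)" using w by simp
        ultimately show False using t by blast
      qed
      then show "sgn w * Kf (1 / w * t) = cn n t * hilbert (\<lambda>s. g (s / w)) t"
        using w by (simp add: hs Kf_def)
    qed
    also have "\<dots> = sgn w * (integral UNIV Kf / \<bar>1 / w\<bar>)"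
      using integral_scale_UNIV[of "1 / w" Kf] w by simp
    also have "\<dots> = sgn w * \<bar>w\<bar> * integral UNIV Kf" by (simp add: abs_divide)
    finally have eq: "integral UNIV (\<lambda>t. cn n t * hilbert (\<lambda>s. g (s / w)) t) = sgn w * \<bar>w\<bar> * integral UNIV Kf" .
    have "sn_integral n g \<omega> = integral UNIV (\<lambda>t. cn n t * hilbert (\<lambda>s. g (s / w)) t) / \<bar>w\<bar>"
      using False unfolding sn_integral_def sn_pair_def dist_hilbert_def w_def by simp
    also have "\<dots> = sgn w * integral UNIV Kf" using eq w by simp
    finally have "sn_integral n g \<omega> = sgn \<omega> * integral UNIV (\<lambda>t. cn n (\<omega> * t) * hilbert g t)"
      unfolding Kf_def w_def .
    then show ?thesis by simp
  qed
qed

end
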